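(* Let $P$ be a $k\times k$ permutation matrix and let $m$ and $n$ be relatively prime positive integers. Then there are diagonal integer matrices $D_1$ and $D_2$ of size $k\times k$ satisfying $\gcd(\det(D_1), m) = 1$, $\gcd(\det(D_2), n) = 1$, and $\det(nD_1 + mD_2P) = 1$. *)

theory Defs
  imports "HOL-Analysis.Analysis"
begin

definition perm_matrix :: "('a::{zero,one}) ^'k^'k \<Rightarrow> bool" where
  "perm_matrix P \<longleftrightarrow> (\<exists>p. p permutes (UNIV :: 'k set) \<and>
      P = (\<chi> i j. if p i = j then 1 else 0))"

definition diag_matrix :: "('a::zero) ^'k^'k \<Rightarrow> bool" where
  "diag_matrix D \<longleftrightarrow> (\<forall>i j. i \<noteq> j \<longrightarrow> D $ i $ j = 0)"

end

theory Submission imports Defs "HOL-Combinatorics.Cycles" begin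

definition MM :: "int \<Rightarrow> int \<Rightarrow> ('k::finite \<Rightarrow> 'k) \<Rightarrow> ('k \<Rightarrow> int) \<Rightarrow> ('k \<Rightarrow> int) \<Rightarrow> 'k set \<Rightarrow> int^'k^'k" where
"MM n m p a b S = (\<chi> i j. if i \<in> S then (if i = j then n * a i else 0) + (if p i = j then m * b i else 0) else (if i = j then 1 else 0))"

lemma MM_cong: "(\<And>i. i \<in> S \<Longrightarrow> a i = a' i \<and> b i = b' i) \<Longrightarrow> MM n m p a b S = MM n m p a' b' S"
  by (simp add: MM_def vec_eq_iff)

lemma MM_mult:
  assumes "p ` C \<subseteq> C" "C \<inter> S = {}"
  shows "MM n m p a b (C \<union> S) = MM n m p a b C ** MM n m p a b S"
proof -
  have "(MM n m p a b C ** MM n m p a b S) $ i $ j = MM n m p a b (C \<union> S) $ i $ j" for i j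
  proof (cases "i \<in> C")
    case True
    have eq: "\<And>k. MM n m p a b C $ i $ k * MM n m p a b S $ k $ j = (if k = j then MM n m p a b C $ i $ j else 0)"
    proof -
      fix k
      have "p i \<in> C" "i \<notin> S" "p i \<notin> S" using True assms by auto
      then show "MM n m p a b C $ i $ k * MM n m p a b S $ k $ j = (if k = j then MM n m p a b C $ i $ j else 0)"
        using True by (auto simp: MM_def)
    qed
    have "(MM n m p a b C ** MM n m p a b S) $ i $ j = (\<Sum>k\<in>UNIV. if k = j then MM n m p a b C $ i $ j else 0)"
      unfolding matrix_matrix_mult_def by (simp only: vec_lambda_beta eq)
    also have "\<dots> = MM n m p a b C $ i $ j" by simp
    also have "\<dots> = MM n m p a b (C \<union> S) $ i $ j" using True by (simp add: MM_def)
    finally show ?thesis .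
  next
    case False
    have eq: "\<And>k. MM n m p a b C $ i $ k * MM n m p a b S $ k $ j = (if k = i then MM n m p a b S $ i $ j else 0)"
      using False by (auto simp: MM_def)
    have "(MM n m p a b C ** MM n m p a b S) $ i $ j = (\<Sum>k\<in>UNIV. if k = i then MM n m p a b S $ i $ j else 0)"
      unfolding matrix_matrix_mult_def by (simp only: vec_lambda_beta eq)
    also have "\<dots> = MM n m p a b S $ i $ j" by simp
    also have "\<dots> = MM n m p a b (C \<union> S) $ i $ j" using False by (simp add: MM_def)
    finally show ?thesis .
  qed
  thus ?thesis by (simp add: vec_eq_iff)
qed


lemma cop_lin: "(A::int) * x + B * y = 1 \<Longrightarrow> coprime x B"
proof (rule coprimeI)
  fix c assume "(A::int) * x + B * y = 1" "c dvd x" "c dvd B"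
  then have "c dvd A * x + B * y" by (intro dvd_add dvd_mult dvd_mult2)
  then show "is_unit c" unfolding \<open>A * x + B * y = 1\<close> .
qed

lemma orbit_facts:
  fixes p :: "'k::finite \<Rightarrow> 'k"
  assumes pp: "p permutes UNIV"
  shows "p ` range (\<lambda>k. (p ^^ k) cc) \<subseteq> range (\<lambda>k. (p ^^ k) cc)"
    and "p y \<in> range (\<lambda>k. (p ^^ k) cc) \<Longrightarrow> y \<in> range (\<lambda>k. (p ^^ k) cc)"
    and "z \<in> range (\<lambda>k. (p ^^ k) cc) \<Longrightarrow> z \<in> T \<Longrightarrow> p ` T \<subseteq> T \<Longrightarrow> range (\<lambda>k. (p ^^ k) cc) \<subseteq> T"
proof -
  obtain N where N: "p ^^ N = id" "N > 0"
    using permutation_is_nilpotent permutes_imp_permutation[OF finite_class.finite_UNIV pp] by blast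
  have injp: "inj p" using pp permutes_imp_bij bij_is_inj by blast
  show "p ` range (\<lambda>k. (p ^^ k) cc) \<subseteq> range (\<lambda>k. (p ^^ k) cc)"
  proof
    fix w assume "w \<in> p ` range (\<lambda>k. (p ^^ k) cc)"
    then obtain k where "w = p ((p ^^ k) cc)" by auto
    then have "w = (p ^^ Suc k) cc" by simp
    then show "w \<in> range (\<lambda>k. (p ^^ k) cc)" by blast
  qed
  show "y \<in> range (\<lambda>k. (p ^^ k) cc)" if "p y \<in> range (\<lambda>k. (p ^^ k) cc)"
  proof -
    from that obtain k where k: "p y = (p ^^ k) cc" by auto
    have "p ((p ^^ (k + N - 1)) cc) = (p ^^ Suc (k + N - 1)) cc" by simp
    also have "Suc (k + N - 1) = k + N" using N by simp
    also have "(p ^^ (k + N)) cc = (p ^^ k) cc" by (simp add: funpow_add N)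
    finally have "y = (p ^^ (k + N - 1)) cc" using k injp by (metis injD)
    then show ?thesis by blast
  qed
  show "range (\<lambda>k. (p ^^ k) cc) \<subseteq> T"
    if z: "z \<in> range (\<lambda>k. (p ^^ k) cc)" and zT: "z \<in> T" and pT: "p ` T \<subseteq> T"
  proof -
    have all: "(p ^^ k) z \<in> T" for k
      by (induction k) (use zT pT in auto)
    from z obtain j where j: "z = (p ^^ j) cc" by auto
    have "(p ^^ (N * j)) = id" by (metis N(1) funpow_mult id_funpow)
    moreover have "N * j - j + j = N * j" using N by simp
    ultimately have "(p ^^ (N * j - j)) z = cc" using j
      by (metis comp_apply funpow_add id_apply)
    then have "(p ^^ (k + (N * j - j))) z = (p ^^ k) cc" for k by (simp add: funpow_add)
    then show ?thesis using all by (metis image_subset_iff)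
  qed
qed

lemma cycle_det:
  fixes p :: "'k::finite \<Rightarrow> 'k" and n m :: int and cc :: 'k
  assumes pp: "p permutes UNIV"
  defines "C \<equiv> range (\<lambda>k. (p ^^ k) cc)"
  shows "\<exists>s L. (s = 1 \<or> s = -1) \<and> L > 0 \<and> (\<forall>a b. (\<forall>i\<in>C-{cc}. a i = 1 \<and> b i = 1) \<longrightarrow>
           det (MM n m p a b C) = n^L * a cc + s * m^L * b cc)"
proof (cases "p cc = cc")
  case True
  have "(p ^^ k) cc = cc" for k by (induction k) (use True in auto)
  then have C1: "C = {cc}" unfolding C_def by auto
  have "det (MM n m p a b C) = n^1 * a cc + 1 * m^1 * b cc" for a b
  proof -
    have "det (MM n m p a b C) = (\<Prod>i\<in>UNIV. MM n m p a b C $ i $ i)"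
      by (rule det_diagonal) (auto simp: MM_def C1 True)
    also have "\<dots> = (\<Prod>i\<in>UNIV. if i = cc then n * a cc + m * b cc else 1)"
      by (rule prod.cong) (auto simp: MM_def C1 True)
    also have "\<dots> = n * a cc + m * b cc" by (simp add: prod.delta)
    finally show ?thesis using True by simp
  qed
  then show ?thesis by blast
next
  case False
  have injp: "inj p" using pp permutes_imp_bij bij_is_inj by blast
  note of = orbit_facts[OF pp, where cc=cc, folded C_def]
  have backC: "\<And>y. p y \<in> C \<Longrightarrow> y \<in> C" using orbit_facts(2)[OF pp] unfolding C_def by blast
  have ccC: "cc \<in> C" unfolding C_def by (metis funpow_0 rangeI)
  have nofix: "p i \<noteq> i" if "i \<in> C" for i
  proof
    assume pi: "p i = i"
    from that obtain k where k: "i = (p ^^ k) cc" unfolding C_def by auto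
    have "(p ^^ k) (p cc) = (p ^^ k) cc" using pi k by (simp add: funpow_swap1)
    then have "p cc = cc" using inj_fn[OF injp, of k] by (meson injD)
    with False show False by simp
  qed
  have nofix': "i \<noteq> p i" if "i \<in> C" for i using nofix[OF that] by simp
  define q where "q = (\<lambda>i. if i \<in> C then p i else i)"
  have qC: "bij_betw q C C"
  proof -
    have "inj_on q C" unfolding q_def using injp by (auto simp: inj_on_def dest: injD)
    moreover have "q ` C = C"
    proof
      show "q ` C \<subseteq> C" using of(1) by (auto simp: q_def)
      show "C \<subseteq> q ` C"
      proof
        fix y assume "y \<in> C"
        have "p (inv p y) = y" using pp permutes_inverses(1) by fastforce
        then have "inv p y \<in> C" using backC \<open>y \<in> C\<close> by simp
        then show "y \<in> q ` C" using \<open>p (inv p y) = y\<close> by (force simp: q_def)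
      qed
    qed
    ultimately show ?thesis by (simp add: bij_betw_def)
  qed
  have qperm: "q permutes UNIV"
    using bij_imp_permutes[OF qC] q_def permutes_subset by fastforce
  have qid: "q \<noteq> id" using False ccC by (auto simp: q_def fun_eq_iff)
  define L where "L = card C"
  have L0: "L > 0" using ccC by (auto simp: L_def card_gt_0_iff)
  have "det (MM n m p a b C) = n^L * a cc + sign q * m^L * b cc"
    if ab: "\<forall>i\<in>C-{cc}. a i = 1 \<and> b i = 1" for a b
  proof -
    let ?M = "MM n m p a b C"
    have nz: "\<sigma> = id \<or> \<sigma> = q" if sp: "\<sigma> permutes UNIV" and pr: "(\<Prod>i\<in>UNIV. ?M $ i $ \<sigma> i) \<noteq> 0" for \<sigma>
    proof -
      have ne: "?M $ i $ \<sigma> i \<noteq> 0" for i using pr by (simp add: prod_zero_iff) 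
      have hM: "(i \<notin> C \<longrightarrow> \<sigma> i = i) \<and> (i \<in> C \<longrightarrow> \<sigma> i = i \<or> \<sigma> i = p i)" for i
        using ne[of i] by (auto simp: MM_def split: if_splits)
      have injs: "inj \<sigma>" using sp permutes_imp_bij bij_is_inj by blast
      show ?thesis
      proof (cases "\<sigma> = id")
        case True then show ?thesis by simp
      next
        case False
        then obtain z where z: "\<sigma> z \<noteq> z" by (auto simp: fun_eq_iff)
        then have zC: "z \<in> C" and sz: "\<sigma> z = p z" using hM[of z] by auto
        let ?T = "{i. \<sigma> i = p i}"
        have "p ` ?T \<subseteq> ?T"
        proof
          fix w assume "w \<in> p ` ?T"
          then obtain i where i: "\<sigma> i = p i" "w = p i" by auto
          show "w \<in> ?T"
          proof (cases "\<sigma> w = w")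
            case True
            then have "\<sigma> w = \<sigma> i" using i by simp
            then have "w = i" using injs by (meson injD)
            then show ?thesis using i by simp
          next
            case False
            then show ?thesis using hM[of w] by auto
          qed
        qed
        then have "C \<subseteq> ?T" using of(3)[OF zC] sz by auto
        then have "\<sigma> = q" using hM by (auto simp: q_def fun_eq_iff)
        then show ?thesis by simp
      qed
    qed
    have "det ?M = (\<Sum>\<sigma>\<in>{\<sigma>. \<sigma> permutes UNIV}. of_int (sign \<sigma>) * (\<Prod>i\<in>UNIV. ?M $ i $ \<sigma> i))"
      by (simp add: det_def)
    also have "\<dots> = (\<Sum>\<sigma>\<in>{id, q}. of_int (sign \<sigma>) * (\<Prod>i\<in>UNIV. ?M $ i $ \<sigma> i))"
      by (rule sum.mono_neutral_right) (use nz qperm permutes_id in auto)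
    also have "\<dots> = (\<Prod>i\<in>UNIV. ?M $ i $ i) + sign q * (\<Prod>i\<in>UNIV. ?M $ i $ q i)"
      using qid by (simp add: sign_id)
    also have "(\<Prod>i\<in>UNIV. ?M $ i $ i) = (\<Prod>i\<in>UNIV. if i \<in> C then n * a i else 1)"
      by (rule prod.cong) (auto simp: MM_def nofix nofix')
    also have "\<dots> = (\<Prod>i\<in>C. n * a i)"
      by (simp add: prod.inter_filter[symmetric])
    also have "\<dots> = n^L * (\<Prod>i\<in>C. a i)" by (simp add: prod.distrib L_def)
    also have "(\<Prod>i\<in>C. a i) = a cc"
      using prod.remove[OF finite ccC, of a] ab by (simp add: prod.neutral)
    also have "(\<Prod>i\<in>UNIV. ?M $ i $ q i) = (\<Prod>i\<in>UNIV. if i \<in> C then m * b i else 1)"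
      by (rule prod.cong) (auto simp: MM_def q_def nofix nofix')
    also have "\<dots> = (\<Prod>i\<in>C. m * b i)"
      by (simp add: prod.inter_filter[symmetric])
    also have "\<dots> = m^L * (\<Prod>i\<in>C. b i)" by (simp add: prod.distrib L_def)
    also have "(\<Prod>i\<in>C. b i) = b cc"
      using prod.remove[OF finite ccC, of b] ab by (simp add: prod.neutral)
    finally show ?thesis by (simp add: algebra_simps)
  qed
  moreover have "sign q = 1 \<or> sign q = (-1::int)" by (simp add: sign_def)
  ultimately show ?thesis using L0 by blast
qed


lemma main_ind:
  fixes p :: "'k::finite \<Rightarrow> 'k" and m n :: int
  assumes pp: "p permutes UNIV" and cop: "coprime m n"
  shows "p ` S \<subseteq> S \<Longrightarrow> \<exists>a b. (\<forall>i. coprime (a i) m) \<and> (\<forall>i. coprime (b i) n) \<and> det (MM n m p a b S) = 1"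
proof (induction "card S" arbitrary: S rule: less_induct)
  case less
  show ?case
  proof (cases "S = {}")
    case True
    have "MM n m p (\<lambda>_. 1) (\<lambda>_. 1) S = mat 1" by (simp add: MM_def True mat_def)
    then show ?thesis by (intro exI[of _ "\<lambda>_. 1"]) simp
  next
    case False
    then obtain x0 where x0S: "x0 \<in> S" by auto
    define C where "C = range (\<lambda>k. (p ^^ k) x0)"
    have x0C: "x0 \<in> C" unfolding C_def by (metis funpow_0 rangeI)
    have CS: "C \<subseteq> S" unfolding C_def
      using orbit_facts(3)[OF pp, of x0 x0 S] x0S less.prems x0C[unfolded C_def] by blast
    have pC: "p ` C \<subseteq> C" unfolding C_def by (rule orbit_facts(1)[OF pp])
    have backC: "\<And>y. p y \<in> C \<Longrightarrow> y \<in> C" using orbit_facts(2)[OF pp] unfolding C_def by blast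
    define S' where "S' = S - C"
    have pS': "p ` S' \<subseteq> S'" using less.prems backC by (auto simp: S'_def)
    have "card S' < card S" unfolding S'_def using x0C x0S
      by (intro psubset_card_mono) auto
    from less.hyps[OF this pS'] obtain a' b' where
      ab': "\<forall>i. coprime (a' i) m" "\<forall>i. coprime (b' i) n" "det (MM n m p a' b' S') = 1" by blast
    obtain s L where sL: "s = 1 \<or> s = -1" "L > 0"
      and dC: "\<And>a b. (\<forall>i\<in>C-{x0}. a i = 1 \<and> b i = 1) \<Longrightarrow> det (MM n m p a b C) = n^L * a x0 + s * m^L * b x0"
      using cycle_det[OF pp, where n=n and m=m and cc=x0] unfolding C_def by blast
    have "coprime (n^L) (s * m^L)" using sL(1) cop by (auto simp: coprime_commute)
    then obtain x y where xy: "x * n^L + y * (s * m^L) = 1"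
      using bezout_int[of "n^L" "s * m^L"] by (auto simp: coprime_iff_gcd_eq_1)
    have cx: "coprime x m"
    proof -
      have "n^L * x + m^L * (s * y) = 1" using xy by (simp add: algebra_simps)
      then have "coprime x (m^L)" by (rule cop_lin)
      then show ?thesis using sL(2) by simp
    qed
    have cy: "coprime y n"
    proof -
      have "(s * m^L) * y + n^L * x = 1" using xy by (simp add: algebra_simps)
      then have "coprime y (n^L)" by (rule cop_lin)
      then show ?thesis using sL(2) by simp
    qed
    define a where "a = (\<lambda>i. if i \<in> C then (if i = x0 then x else 1) else a' i)"
    define b where "b = (\<lambda>i. if i \<in> C then (if i = x0 then y else 1) else b' i)"
    have S: "S = C \<union> S'" using CS by (auto simp: S'_def)
    have "MM n m p a b S = MM n m p a b C ** MM n m p a b S'"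
      unfolding S by (rule MM_mult[OF pC]) (auto simp: S'_def)
    then have "det (MM n m p a b S) = det (MM n m p a b C) * det (MM n m p a b S')"
      by (simp add: det_mul)
    also have "det (MM n m p a b C) = n^L * x + s * m^L * y"
      using dC[of a b] x0C by (simp add: a_def b_def)
    also have "\<dots> = 1" using xy by (simp add: algebra_simps)
    also have "MM n m p a b S' = MM n m p a' b' S'"
      by (rule MM_cong) (auto simp: a_def b_def S'_def)
    finally have "det (MM n m p a b S) = 1" using ab' by simp
    moreover have "\<forall>i. coprime (a i) m" using ab' cx by (simp add: a_def)
    moreover have "\<forall>i. coprime (b i) n" using ab' cy by (simp add: b_def)
    ultimately show ?thesis by blast
  qed
qed

theorem lemma3p5:
  fixes P :: "int ^'k^'k" and m n :: int
  assumes "perm_matrix P"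
    and "m > 0" and "n > 0" and "coprime m n"
  shows "\<exists>D1 D2 :: int ^'k^'k. diag_matrix D1 \<and> diag_matrix D2 \<and>
           gcd (det D1) m = 1 \<and> gcd (det D2) n = 1 \<and>
           det (mat n ** D1 + mat m ** D2 ** P) = 1"
proof -
  obtain p where pp: "p permutes (UNIV :: 'k set)" and P: "P = (\<chi> i j. if p i = j then 1 else 0)"
    using assms(1) unfolding perm_matrix_def by blast
  obtain a b where ab: "\<forall>i. coprime (a i) m" "\<forall>i. coprime (b i) n" "det (MM n m p a b UNIV) = 1"
    using main_ind[OF pp assms(4), of UNIV] by blast
  define D1 :: "int^'k^'k" where "D1 = (\<chi> i j. if i = j then a i else 0)"
  define D2 :: "int^'k^'k" where "D2 = (\<chi> i j. if i = j then b i else 0)"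
  have d1: "diag_matrix D1" "diag_matrix D2" by (auto simp: diag_matrix_def D1_def D2_def)
  have "det D1 = (\<Prod>i\<in>UNIV. a i)" by (subst det_diagonal) (auto simp: D1_def)
  then have g1: "gcd (det D1) m = 1" using ab(1) by (simp add: prod_coprime_left flip: coprime_iff_gcd_eq_1)
  have "det D2 = (\<Prod>i\<in>UNIV. b i)" by (subst det_diagonal) (auto simp: D2_def)
  then have g2: "gcd (det D2) n = 1" using ab(2) by (simp add: prod_coprime_left flip: coprime_iff_gcd_eq_1)
  have e1: "(mat n ** D1) $ i $ j = (if i = j then n * a i else 0)" for i j
  proof -
    have "(mat n ** D1) $ i $ j = (\<Sum>k\<in>UNIV. (if i = k then n else 0) * D1 $ k $ j)"
      by (simp add: matrix_matrix_mult_def mat_def)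
    also have "\<dots> = (\<Sum>k\<in>UNIV. if k = i then n * D1 $ k $ j else 0)"
      by (rule sum.cong) auto
    also have "\<dots> = n * D1 $ i $ j" by simp
    finally show ?thesis by (simp add: D1_def)
  qed
  have e2: "(mat m ** D2) $ i $ j = (if i = j then m * b i else 0)" for i j
  proof -
    have "(mat m ** D2) $ i $ j = (\<Sum>k\<in>UNIV. (if i = k then m else 0) * D2 $ k $ j)"
      by (simp add: matrix_matrix_mult_def mat_def)
    also have "\<dots> = (\<Sum>k\<in>UNIV. if k = i then m * D2 $ k $ j else 0)"
      by (rule sum.cong) auto
    also have "\<dots> = m * D2 $ i $ j" by simp
    finally show ?thesis by (simp add: D2_def)
  qed
  have e3: "(mat m ** D2 ** P) $ i $ j = (if p i = j then m * b i else 0)" for i j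
  proof -
    have "(mat m ** D2 ** P) $ i $ j = (\<Sum>k\<in>UNIV. (mat m ** D2) $ i $ k * P $ k $ j)"
      by (simp add: matrix_matrix_mult_def[of "mat m ** D2" P])
    also have "\<dots> = (\<Sum>k\<in>UNIV. if k = i then m * b i * P $ k $ j else 0)"
      by (rule sum.cong) (auto simp: e2)
    also have "\<dots> = m * b i * P $ i $ j" by simp
    finally show ?thesis by (simp add: P)
  qed
  have "mat n ** D1 + mat m ** D2 ** P = MM n m p a b UNIV"
    by (simp add: vec_eq_iff e1 e3 MM_def)
  then have "det (mat n ** D1 + mat m ** D2 ** P) = 1" using ab(3) by simp
  then show ?thesis using d1 g1 g2 by (intro exI[of _ D1] exI[of _ D2] conjI)
qed

end
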